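(* Let ${\cal H}_1=(V_1,{\cal E}_1)$ and ${\cal H}_2=(V_2,{\cal E}_2)$ be vertex-disjoint $1$-Sperner hypergraphs and let $z\notin V_1\cup V_2$. Then the gluing ${\cal H}_1\odot{\cal H}_2$ is a $1$-Sperner hypergraph, unless ${\cal E}_1=\{V_1\}$ and ${\cal E}_2=\{\emptyset\}$, in which case ${\cal H}_1\odot{\cal H}_2$ is not Sperner.
   Context: A hypergraph ${\cal H}=(V,{\cal E})$ consists of a finite vertex set $V$ and a set ${\cal E}$ of subsets of $V$ (hyperedges). It is Sperner if no hyperedge properly contains another, and $1$-Sperner if every two distinct hyperedges $e,f$ satisfy $\min\{|e\setminus f|,|f\setminus e|\}=1$ (in particular every hypergraph with at most one hyperedge is $1$-Sperner). Given vertex-disjoint hypergraphs ${\cal H}_1=(V_1,{\cal E}_1)$, ${\cal H}_2=(V_2,{\cal E}_2)$ and a new vertex $z\notin V_1\cup V_2$, the gluing ${\cal H}_1\odot{\cal H}_2$ is the hypergraph with vertex set $V_1\cup V_2\cup\{z\}$ and hyperedge set $\{\{z\}\cup e: e\in{\cal E}_1\}\cup\{V_1\cup e: e\in{\cal E}_2\}$. *)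

theory Defs
  imports Main
begin

type_synonym 'a hypergraph = "'a set \<times> 'a set set"

definition hypergraph :: "'a hypergraph \<Rightarrow> bool" where
  "hypergraph H \<longleftrightarrow> finite (fst H) \<and> (\<forall>e\<in>snd H. e \<subseteq> fst H)"

definition sperner :: "'a hypergraph \<Rightarrow> bool" where
  "sperner H \<longleftrightarrow> (\<forall>e\<in>snd H. \<forall>f\<in>snd H. \<not> (e \<subset> f))"

definition one_sperner :: "'a hypergraph \<Rightarrow> bool" where
  "one_sperner H \<longleftrightarrow> (\<forall>e\<in>snd H. \<forall>f\<in>snd H. e \<noteq> f \<longrightarrow>
      min (card (e - f)) (card (f - e)) = 1)"

definition gluing :: "'a hypergraph \<Rightarrow> 'a hypergraph \<Rightarrow> 'a \<Rightarrow> 'a hypergraph" where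
  "gluing H1 H2 z = (fst H1 \<union> fst H2 \<union> {z},
      {insert z e | e. e \<in> snd H1} \<union> {fst H1 \<union> e | e. e \<in> snd H2})"

end

theory Submission
  imports Defs
begin

theorem proposition2:
  fixes V1 V2 :: "'a set" and E1 E2 :: "'a set set" and z :: 'a
  assumes "hypergraph (V1, E1)" and "hypergraph (V2, E2)"
    and "V1 \<inter> V2 = {}"
    and "one_sperner (V1, E1)" and "one_sperner (V2, E2)"
    and "z \<notin> V1 \<union> V2"
  shows "(\<not> (E1 = {V1} \<and> E2 = {{}}) \<longrightarrow> one_sperner (gluing (V1, E1) (V2, E2) z))
       \<and> (E1 = {V1} \<and> E2 = {{}} \<longrightarrow> \<not> sperner (gluing (V1, E1) (V2, E2) z))"
proof (intro conjI impI)
  have fin: "finite V1" "finite V2" "\<And>e. e \<in> E1 \<Longrightarrow> e \<subseteq> V1" "\<And>e. e \<in> E2 \<Longrightarrow> e \<subseteq> V2"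
    using assms(1,2) by (auto simp: hypergraph_def)
  have s1: "\<And>e f. e \<in> E1 \<Longrightarrow> f \<in> E1 \<Longrightarrow> e \<noteq> f \<Longrightarrow> min (card (e - f)) (card (f - e)) = 1"
    using assms(4) by (auto simp: one_sperner_def)
  have s2: "\<And>e f. e \<in> E2 \<Longrightarrow> f \<in> E2 \<Longrightarrow> e \<noteq> f \<Longrightarrow> min (card (e - f)) (card (f - e)) = 1"
    using assms(5) by (auto simp: one_sperner_def)
  {
    assume E1V: "\<not> (E1 = {V1} \<and> E2 = {{}})"
    have key: "(V1 - e) \<union> f \<noteq> {}" if e: "e \<in> E1" and f: "f \<in> E2" for e f
    proof
      assume h: "(V1 - e) \<union> f = {}"
      hence eV: "e = V1" and f0: "f = {}" using fin(3)[OF e] by auto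
      have "E1 = {V1}"
      proof -
        { fix e' assume e': "e' \<in> E1" "e' \<noteq> V1"
          have "min (card (V1 - e')) (card (e' - V1)) = 1" using s1[OF _ e'(1)] e eV e' by auto
          moreover have "e' - V1 = {}" using fin(3)[OF e'(1)] by auto
          ultimately have False by simp }
        thus ?thesis using e eV by blast
      qed
      moreover have "E2 = {{}}"
      proof -
        { fix f' assume f': "f' \<in> E2" "f' \<noteq> {}"
          have "min (card ({} - f')) (card (f' - {})) = 1" using s2[OF _ f'(1), of "{}"] f f0 f' by auto
          hence False by simp }
        thus ?thesis using f f0 by blast
      qed
      ultimately show False using E1V by simp
    qed
    show "one_sperner (gluing (V1, E1) (V2, E2) z)"
      unfolding one_sperner_def gluing_def snd_conv fst_conv
    proof (intro ballI impI)
      fix A B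
      assume A: "A \<in> {insert z e |e. e \<in> E1} \<union> {V1 \<union> e |e. e \<in> E2}"
        and B: "B \<in> {insert z e |e. e \<in> E1} \<union> {V1 \<union> e |e. e \<in> E2}" and AB: "A \<noteq> B"
      have mixed: "min (card (insert z e - (V1 \<union> f))) (card ((V1 \<union> f) - insert z e)) = 1"
        if e: "e \<in> E1" and f: "f \<in> E2" for e f
      proof -
        have "insert z e - (V1 \<union> f) = {z}" using fin(3)[OF e] fin(4)[OF f] assms(6) by auto
        moreover have "(V1 \<union> f) - insert z e = (V1 - e) \<union> f" using fin(3)[OF e] fin(4)[OF f] assms(3,6) by auto
        moreover have "card ((V1 - e) \<union> f) \<ge> 1"
        proof -
          have "finite ((V1 - e) \<union> f)" using fin(1,2) fin(4)[OF f] finite_subset by auto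
          thus ?thesis using key[OF e f] by (simp add: Suc_le_eq card_gt_0_iff)
        qed
        ultimately show ?thesis by simp
      qed
      show "min (card (A - B)) (card (B - A)) = 1"
      proof -
        { fix e e' assume e: "e \<in> E1" "e' \<in> E1" "A = insert z e" "B = insert z e'"
          have "z \<notin> e" "z \<notin> e'" using fin(3) e assms(6) by auto
          hence "A - B = e - e'" "B - A = e' - e" using e by auto
          moreover have "e \<noteq> e'" using AB e by auto
          ultimately have ?thesis using s1 e by simp }
        moreover
        { fix e e' assume e: "e \<in> E2" "e' \<in> E2" "A = V1 \<union> e" "B = V1 \<union> e'"
          have "e \<inter> V1 = {}" "e' \<inter> V1 = {}" using fin(4) e assms(3) by auto
          hence "A - B = e - e'" "B - A = e' - e" using e by auto
          moreover have "e \<noteq> e'" using AB e by auto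
          ultimately have ?thesis using s2 e by simp }
        moreover
        { fix e f assume e: "e \<in> E1" "f \<in> E2" "A = insert z e" "B = V1 \<union> f"
          have ?thesis using mixed[OF e(1,2)] e by simp }
        moreover
        { fix e f assume e: "e \<in> E1" "f \<in> E2" "B = insert z e" "A = V1 \<union> f"
          have ?thesis using mixed[OF e(1,2)] e by (simp add: min.commute) }
        ultimately show ?thesis using A B by blast
      qed
    qed
  }
  assume h: "E1 = {V1} \<and> E2 = {{}}"
  have "V1 \<subset> insert z V1" using assms(6) by auto
  thus "\<not> sperner (gluing (V1, E1) (V2, E2) z)"
    unfolding sperner_def gluing_def using h by auto
qed

end
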